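(* Let $G$, $H$, $K$ be impartial games with $H = K$. Then $G\circ H = G\circ K$.
   Context: All games are finite (short) impartial games under normal play. A game is identified with its set of options; $\mathbf{E}$ denotes the game with no options, and $\equiv$ denotes identity of games (same set of options, recursively). The disjunctive sum is $G+H \equiv \{g+H,\ G+h\}$. A $\mathcal{P}$-position is a game all of whose options are $\mathcal{N}$-positions; an $\mathcal{N}$-position has some option that is a $\mathcal{P}$-position. Two games are equal, $G=H$, if $G+X$ and $H+X$ have the same outcome for every game $X$; for impartial games this holds iff $G+H$ is a $\mathcal{P}$-position. (Equality is weaker than identity $\equiv$.) The split sum is defined recursively by: $G\circ H \equiv \mathbf{E}$ if $G\equiv \mathbf{E}$; $G\circ H\equiv G$ if $H\equiv\mathbf{E}$ (and $G\not\equiv\mathbf{E}$); otherwise $G\circ H \equiv \{G\circ h,\ g\circ H\}$ where $g$ ranges over the options of $G$ and $h$ over the options of $H$. *)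

theory Defs
  imports Main "HOL-Library.FSet"
begin

text \<open>Short impartial games, identified (extensionally, hereditarily) with their finite set
  of options.  Identity of games is HOL equality.\<close>

datatype game = Game (opts: "game fset")

definition E :: game where "E = Game {||}"

lemma size_opt_less: "g |\<in>| opts G \<Longrightarrow> size g < size G"
proof (cases G)
  case (Game S)
  assume a: "g |\<in>| opts G"
  have "size g < Suc (size g)" by simp
  also have "Suc (size g) \<le> (\<Sum>x\<in>fset S. Suc (size x))"
    using a Game by (intro member_le_sum[of g "fset S" "\<lambda>x. Suc (size x)", simplified]) auto
  finally show ?thesis using Game by (simp add: size_fset_simps)
qed

function gsum :: "game \<Rightarrow> game \<Rightarrow> game" where
  "gsum G H = Game ((\<lambda>g. gsum g H) |`| opts G |\<union>| (\<lambda>h. gsum G h) |`| opts H)"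
  by auto
termination
  by (relation "measure (\<lambda>(G, H). size G + size H)") (auto dest: size_opt_less)

function isP :: "game \<Rightarrow> bool" where
  "isP G = (\<forall>g. g |\<in>| opts G \<longrightarrow> \<not> isP g)"
  by auto
termination
  by (relation "measure size") (auto dest: size_opt_less)

definition isN :: "game \<Rightarrow> bool" where "isN G = (\<exists>g. g |\<in>| opts G \<and> isP g)"

definition game_eq :: "game \<Rightarrow> game \<Rightarrow> bool" where
  "game_eq G H = (\<forall>X. isP (gsum G X) = isP (gsum H X))"

function split_sum :: "game \<Rightarrow> game \<Rightarrow> game" where
  "split_sum G H =
     (if G = E then E
      else if H = E then G
      else Game ((\<lambda>h. split_sum G h) |`| opts H |\<union>| (\<lambda>g. split_sum g H) |`| opts G))"
  by auto
termination
  by (relation "measure (\<lambda>(G, H). size G + size H)") (auto dest: size_opt_less)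

end

theory Submission
  imports Defs
begin

declare isP.simps[simp del] gsum.simps[simp del] split_sum.simps[simp del]

lemma isP_iff: "isP G \<longleftrightarrow> (\<forall>g. g |\<in>| opts G \<longrightarrow> \<not> isP g)"
  by (rule isP.simps)

lemma opts_gsum: "x |\<in>| opts (gsum G H) \<longleftrightarrow>
   (\<exists>g. g |\<in>| opts G \<and> x = gsum g H) \<or> (\<exists>h. h |\<in>| opts H \<and> x = gsum G h)"
  by (subst gsum.simps) auto

lemma E_iff: "G = E \<longleftrightarrow> opts G = {||}"
  unfolding E_def by (cases G) auto

lemma split_E_left: "split_sum E H = E" by (subst split_sum.simps) simp

lemma split_E_right: "split_sum g E = g" by (subst split_sum.simps) simp

lemma opts_split: "G \<noteq> E \<Longrightarrow> x |\<in>| opts (split_sum G H) \<longleftrightarrow>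
   (\<exists>h. h |\<in>| opts H \<and> x = split_sum G h) \<or> (\<exists>g. g |\<in>| opts G \<and> x = split_sum g H)"
proof (cases "H = E")
  case True
  assume "G \<noteq> E"
  then show ?thesis using True by (simp add: split_E_right) (simp add: E_def)
next
  case False
  assume "G \<noteq> E"
  then show ?thesis using False by (subst split_sum.simps) auto
qed

lemma gsum_comm: "gsum A B = gsum B A"
proof (induction "size A + size B" arbitrary: A B rule: less_induct)
  case less
  have a: "\<And>a. a |\<in>| opts A \<Longrightarrow> gsum a B = gsum B a"
  proof -
    fix a assume "a |\<in>| opts A"
    then have "size a + size B < size A + size B" using size_opt_less by simp
    then show "gsum a B = gsum B a" using less by blast
  qed
  have b: "\<And>b. b |\<in>| opts B \<Longrightarrow> gsum A b = gsum b A"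
  proof -
    fix b assume "b |\<in>| opts B"
    then have "size A + size b < size A + size B" using size_opt_less by simp
    then show "gsum A b = gsum b A" using less by blast
  qed
  have "opts (gsum A B) = opts (gsum B A)"
  proof (rule fset_eqI)
    fix x show "x |\<in>| opts (gsum A B) \<longleftrightarrow> x |\<in>| opts (gsum B A)"
      unfolding opts_gsum using a b by (auto simp: a b)
  qed
  then show ?case by (metis game.sel game.exhaust)
qed

lemma gsum_assoc: "gsum (gsum A B) C = gsum A (gsum B C)"
proof (induction "size A + size B + size C" arbitrary: A B C rule: less_induct)
  case less
  have a: "\<And>a. a |\<in>| opts A \<Longrightarrow> gsum (gsum a B) C = gsum a (gsum B C)"
  proof -
    fix a assume "a |\<in>| opts A"
    then have "size a + size B + size C < size A + size B + size C" using size_opt_less by simp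
    then show "gsum (gsum a B) C = gsum a (gsum B C)" using less by blast
  qed
  have b: "\<And>b. b |\<in>| opts B \<Longrightarrow> gsum (gsum A b) C = gsum A (gsum b C)"
  proof -
    fix b assume "b |\<in>| opts B"
    then have "size A + size b + size C < size A + size B + size C" using size_opt_less by simp
    then show "gsum (gsum A b) C = gsum A (gsum b C)" using less by blast
  qed
  have c: "\<And>c. c |\<in>| opts C \<Longrightarrow> gsum (gsum A B) c = gsum A (gsum B c)"
  proof -
    fix c assume "c |\<in>| opts C"
    then have "size A + size B + size c < size A + size B + size C" using size_opt_less by simp
    then show "gsum (gsum A B) c = gsum A (gsum B c)" using less by blast
  qed
  have "opts (gsum (gsum A B) C) = opts (gsum A (gsum B C))"
  proof (rule fset_eqI)
    fix x
    show "x |\<in>| opts (gsum (gsum A B) C) \<longleftrightarrow> x |\<in>| opts (gsum A (gsum B C))"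
      unfolding opts_gsum using a b c by (auto simp: a b c)
  qed
  then show ?case by (metis game.sel game.exhaust)
qed

lemma P_sum: "isP A \<Longrightarrow> isP (gsum A B) = isP B"
proof (induction "size A + size B" arbitrary: A B rule: less_induct)
  case less
  show ?case
  proof
    assume h: "isP (gsum A B)"
    show "isP B"
    proof (rule ccontr)
      assume "\<not> isP B"
      then obtain b where b: "b |\<in>| opts B" "isP b" using isP_iff by blast
      have "isP (gsum A b)" using less(1)[of A b] less(2) b size_opt_less by fastforce
      moreover have "gsum A b |\<in>| opts (gsum A B)" using b opts_gsum by blast
      ultimately show False using h isP_iff by blast
    qed
  next
    assume hB: "isP B"
    show "isP (gsum A B)"
      unfolding isP_iff[of "gsum A B"] opts_gsum
    proof (intro allI impI, elim disjE exE conjE)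
      fix x a assume a: "a |\<in>| opts A" "x = gsum a B"
      then have "\<not> isP a" using less(2) isP_iff by blast
      then obtain a' where a': "a' |\<in>| opts a" "isP a'" using isP_iff by blast
      have "size a' < size A" using a a' by (meson less_trans size_opt_less)
      then have "isP (gsum a' B)" using less(1)[of a' B] a' hB by simp
      moreover have "gsum a' B |\<in>| opts x" using a a' opts_gsum by blast
      ultimately show "\<not> isP x" using isP_iff by blast
    next
      fix x b assume b: "b |\<in>| opts B" "x = gsum A b"
      then have "\<not> isP b" using hB isP_iff by blast
      moreover have "size b < size B" using b size_opt_less by blast
      ultimately show "\<not> isP x" using less(1)[of A b] less(2) b by simp
    qed
  qed
qed

lemma P_self: "isP (gsum K K)"
proof (induction "size K" arbitrary: K rule: less_induct)
  case less
  show ?case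
    unfolding isP_iff[of "gsum K K"] opts_gsum
  proof (intro allI impI, elim disjE exE conjE)
    fix x k assume k: "k |\<in>| opts K" "x = gsum k K"
    then have "isP (gsum k k)" using less size_opt_less by blast
    moreover have "gsum k k |\<in>| opts x" using k opts_gsum by blast
    ultimately show "\<not> isP x" using isP_iff by blast
  next
    fix x k assume k: "k |\<in>| opts K" "x = gsum K k"
    then have "isP (gsum k k)" using less size_opt_less by blast
    moreover have "gsum k k |\<in>| opts x" using k opts_gsum by blast
    ultimately show "\<not> isP x" using isP_iff by blast
  qed
qed

lemma eq_of_P: assumes "isP (gsum H K)" shows "game_eq H K"
  unfolding game_eq_def
proof
  fix X
  have "isP (gsum K X) = isP (gsum (gsum H K) (gsum K X))"
    using P_sum[OF assms] by simp
  also have "gsum (gsum H K) (gsum K X) = gsum (gsum K K) (gsum H X)"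
    by (metis gsum_assoc gsum_comm)
  also have "isP \<dots> = isP (gsum H X)" using P_sum[OF P_self] by simp
  finally show "isP (gsum H X) = isP (gsum K X)" by simp
qed

lemma P_opt: "z |\<in>| opts x \<Longrightarrow> isP z \<Longrightarrow> \<not> isP x"
  using isP_iff by blast

lemma P_opt_N: "isP x \<Longrightarrow> z |\<in>| opts x \<Longrightarrow> \<not> isP z"
  using isP_iff by blast

lemma N_obt: "\<not> isP x \<Longrightarrow> \<exists>z. z |\<in>| opts x \<and> isP z"
  using isP_iff by blast

lemma gsum_optL: "g |\<in>| opts G \<Longrightarrow> gsum g H |\<in>| opts (gsum G H)"
  using opts_gsum by blast

lemma gsum_optR: "h |\<in>| opts H \<Longrightarrow> gsum G h |\<in>| opts (gsum G H)"
  using opts_gsum by blast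

lemma split_optL: "G \<noteq> E \<Longrightarrow> g |\<in>| opts G \<Longrightarrow> split_sum g H |\<in>| opts (split_sum G H)"
  using opts_split by blast

lemma split_optR: "G \<noteq> E \<Longrightarrow> h |\<in>| opts H \<Longrightarrow> split_sum G h |\<in>| opts (split_sum G H)"
  using opts_split by blast

lemma main: "isP (gsum H K) \<Longrightarrow> isP (gsum (split_sum G H) (split_sum G K))"
proof (induction "size G + size H + size K" arbitrary: G H K rule: less_induct)
  case less
  show ?case
  proof (cases "G = E")
    case True
    then show ?thesis using P_self[of E] by (simp add: split_E_left)
  next
    case GE: False
    show ?thesis
      unfolding isP_iff[of "gsum (split_sum G H) (split_sum G K)"] opts_gsum opts_split[OF GE]
    proof (intro allI impI, elim disjE exE conjE)
      fix x y h assume h: "h |\<in>| opts H" "y = split_sum G h" "x = gsum y (split_sum G K)"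
      have "\<not> isP (gsum h K)" using P_opt_N[OF less(2) gsum_optL[OF h(1)]] .
      then obtain z where z: "z |\<in>| opts (gsum h K)" "isP z" using N_obt by blast
      then consider (a) h' where "h' |\<in>| opts h" "z = gsum h' K"
        | (b) k where "k |\<in>| opts K" "z = gsum h k" using opts_gsum by blast
      then show "\<not> isP x"
      proof cases
        case a
        have "size h' < size H" using a h by (meson less_trans size_opt_less)
        then have "isP (gsum (split_sum G h') (split_sum G K))"
          using less(1)[of G h' K] a z by simp
        moreover have "split_sum G h' |\<in>| opts y" using split_optR[OF GE a(1)] h(2) by simp
        ultimately show ?thesis using P_opt gsum_optL h(3) by metis
      next
        case b
        have "size h + size k < size H + size K" using b h size_opt_less by (simp add: add_strict_mono)
        then have "isP (gsum (split_sum G h) (split_sum G k))"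
          using less(1)[of G h k] b z by simp
        moreover have "split_sum G k |\<in>| opts (split_sum G K)" using split_optR[OF GE b(1)] .
        ultimately show ?thesis using P_opt gsum_optR h(2,3) by metis
      qed
    next
      fix x y g assume g: "g |\<in>| opts G" "y = split_sum g H" "x = gsum y (split_sum G K)"
      have "size g < size G" using g size_opt_less by blast
      then have "isP (gsum (split_sum g H) (split_sum g K))"
        using less(1)[of g H K] less(2) by simp
      moreover have "split_sum g K |\<in>| opts (split_sum G K)" using split_optL[OF GE g(1)] .
      ultimately show "\<not> isP x" using P_opt gsum_optR g(2,3) by metis
    next
      fix x y k assume k: "k |\<in>| opts K" "y = split_sum G k" "x = gsum (split_sum G H) y"
      have "\<not> isP (gsum H k)" using P_opt_N[OF less(2) gsum_optR[OF k(1)]] .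
      then obtain z where z: "z |\<in>| opts (gsum H k)" "isP z" using N_obt by blast
      then consider (a) k' where "k' |\<in>| opts k" "z = gsum H k'"
        | (b) h where "h |\<in>| opts H" "z = gsum h k" using opts_gsum by blast
      then show "\<not> isP x"
      proof cases
        case a
        have "size k' < size K" using a k by (meson less_trans size_opt_less)
        then have "isP (gsum (split_sum G H) (split_sum G k'))"
          using less(1)[of G H k'] a z by simp
        moreover have "split_sum G k' |\<in>| opts y" using split_optR[OF GE a(1)] k(2) by simp
        ultimately show ?thesis using P_opt gsum_optR k(3) by metis
      next
        case b
        have "size h + size k < size H + size K" using b k size_opt_less by (simp add: add_strict_mono)
        then have "isP (gsum (split_sum G h) (split_sum G k))"
          using less(1)[of G h k] b z by simp
        moreover have "split_sum G h |\<in>| opts (split_sum G H)" using split_optR[OF GE b(1)] .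
        ultimately show ?thesis using P_opt gsum_optL k(2,3) by metis
      qed
    next
      fix x y g assume g: "g |\<in>| opts G" "y = split_sum g K" "x = gsum (split_sum G H) y"
      have "size g < size G" using g size_opt_less by blast
      then have "isP (gsum (split_sum g H) (split_sum g K))"
        using less(1)[of g H K] less(2) by simp
      moreover have "split_sum g H |\<in>| opts (split_sum G H)" using split_optL[OF GE g(1)] .
      ultimately show "\<not> isP x" using P_opt gsum_optL g(2,3) by metis
    qed
  qed
qed

theorem theorem2p5:
  fixes G H K :: game
  assumes "game_eq H K"
  shows "game_eq (split_sum G H) (split_sum G K)"
proof -
  have "isP (gsum H K)" using assms P_self unfolding game_eq_def by blast
  then show ?thesis using main eq_of_P by blast
qed

end
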